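(* $\mathfrak{mc}(\mathsf{null},\subseteq)=\operatorname{non}(\mathsf{null})$.
   Context: $\mathsf{null}$ is the ideal of Lebesgue measure zero subsets of $2^\omega$, ordered by inclusion. For a poset $P$, a chain is a set of pairwise comparable elements and $\mathfrak{mc}(P)$ is the minimal cardinality of a maximal (under inclusion) chain. $\operatorname{non}(\mathsf{null})$ is the minimal size of a subset of $2^\omega$ that is not Lebesgue null. *)

theory Defs
  imports "HOL-Probability.Probability"
begin

unbundle cardinal_syntax

definition cantor_measure :: "(nat \<Rightarrow> bool) measure" where
  "cantor_measure = PiM UNIV (\<lambda>_. measure_pmf (bernoulli_pmf (1/2)))"

text \<open>The null ideal: all subsets of 2^omega of (outer) Lebesgue measure zero,
  i.e. subsets of measurable null sets.\<close>
definition null :: "(nat \<Rightarrow> bool) set set" where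
  "null = {A. \<exists>B \<in> null_sets cantor_measure. A \<subseteq> B}"

definition min_card_in :: "'a set set \<Rightarrow> 'a set \<Rightarrow> bool" where
  "min_card_in S A \<longleftrightarrow> A \<in> S \<and> (\<forall>B \<in> S. card_of A \<le>o card_of B)"

definition maximal_chains_null :: "(nat \<Rightarrow> bool) set set set" where
  "maximal_chains_null = {C. subset.maxchain null C}"

definition non_null_sets :: "(nat \<Rightarrow> bool) set set" where
  "non_null_sets = {X. X \<notin> null}"

end

theory Submission imports Defs begin

lemma cantor_prob: "prob_space cantor_measure"
  unfolding cantor_measure_def by (intro prob_space_PiM prob_space_measure_pmf)

lemma cantor_space: "space cantor_measure = UNIV"
  unfolding cantor_measure_def by (auto simp: space_PiM)

lemma univ_not_null: "UNIV \<notin> null"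
proof
  assume "UNIV \<in> null"
  then obtain B where B: "B \<in> null_sets cantor_measure" "UNIV \<subseteq> B" unfolding null_def by auto
  then have "B = space cantor_measure" using cantor_space by auto
  then show False using B prob_space.emeasure_space_1[OF cantor_prob] by auto
qed

lemma emb_meas:
  fixes z :: "nat \<Rightarrow> bool"
  shows "emeasure cantor_measure (prod_emb UNIV (\<lambda>_. measure_pmf (bernoulli_pmf (1/2))) {..<n} (Pi\<^sub>E {..<n} (\<lambda>i. {z i}))) = ennreal ((1/2)^n)"
  unfolding cantor_measure_def
  apply (subst emeasure_PiM_emb)
  apply (auto intro: prob_space_measure_pmf simp: emeasure_pmf_single)
  apply (subgoal_tac "\<forall>i. ennreal (pmf (bernoulli_pmf (1 / 2)) (z i)) = ennreal (1/2)")
  apply (simp add: ennreal_power)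
  apply auto
  apply (simp add: ennreal_power[symmetric])
  done

lemma single_null: "{z} \<in> null"
proof -
  let ?E = "\<lambda>n. prod_emb UNIV (\<lambda>_. measure_pmf (bernoulli_pmf (1/2))) {..<n} (Pi\<^sub>E {..<n} (\<lambda>i. {z i}))"
  have Em: "?E n \<in> sets cantor_measure" for n
    unfolding cantor_measure_def by (intro sets_PiM_I) auto
  let ?B = "\<Inter>n. ?E n"
  have Bm: "?B \<in> sets cantor_measure" using Em by auto
  have zB: "{z} \<subseteq> ?B" by (auto simp: prod_emb_def space_measure_pmf)
  have "emeasure cantor_measure ?B \<le> 0"
  proof (rule ennreal_le_epsilon)
    fix e :: real assume e: "0 < e"
    obtain n where n: "(1/2::real)^n < e" using real_arch_pow_inv[of e "1/2"] e by auto
    have "emeasure cantor_measure ?B \<le> emeasure cantor_measure (?E n)"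
      by (rule emeasure_mono) (use Em in auto)
    also have "\<dots> = ennreal ((1/2)^n)" by (rule emb_meas)
    also have "\<dots> \<le> 0 + ennreal e" using n by (simp add: ennreal_leI)
    finally show "emeasure cantor_measure ?B \<le> 0 + ennreal e" .
  qed
  then have "?B \<in> null_sets cantor_measure" using Bm by auto
  then show ?thesis unfolding null_def using zB by blast
qed

lemma null_Un: "A \<in> null \<Longrightarrow> B \<in> null \<Longrightarrow> A \<union> B \<in> null"
  proof -
  assume "A \<in> null" "B \<in> null"
  then obtain A' B' where "A' \<in> null_sets cantor_measure" "B' \<in> null_sets cantor_measure" "A \<subseteq> A'" "B \<subseteq> B'"
    unfolding null_def by blast
  then show ?thesis unfolding null_def by (intro CollectI bexI[of _ "A' \<union> B'"]) auto
qed

lemma null_sub: "A \<in> null \<Longrightarrow> B \<subseteq> A \<Longrightarrow> B \<in> null"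
  unfolding null_def by blast

lemma maxchain_ins:
  assumes C: "subset.maxchain null C" and N: "N \<in> null" and cmp: "\<forall>A\<in>C. A \<subseteq> N \<or> N \<subseteq> A"
  shows "N \<in> C"
proof (rule ccontr)
  assume "N \<notin> C"
  have ch: "C \<subseteq> null" "\<forall>x\<in>C. \<forall>y\<in>C. x \<subseteq> y \<or> y \<subseteq> x"
    using C unfolding subset.maxchain_def subset.chain_def by auto
  have "subset.chain null (insert N C)"
    unfolding subset.chain_def using ch N cmp by auto
  moreover have "C \<subset> insert N C" using \<open>N \<notin> C\<close> by auto
  ultimately show False using C unfolding subset.maxchain_def by blast
qed

lemma maxchain_chain:
  assumes C: "subset.maxchain null C"
  shows "C \<subseteq> null" "\<And>x y. x\<in>C \<Longrightarrow> y\<in>C \<Longrightarrow> x \<subseteq> y \<or> y \<subseteq> x"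
  using C unfolding subset.maxchain_def subset.chain_def by auto

lemma lower_bound:
  assumes C: "subset.maxchain null C"
  shows "\<Union>C \<notin> null" "|\<Union>C| \<le>o |C|"
proof -
  note ch = maxchain_chain[OF C]
  show nn: "\<Union>C \<notin> null"
  proof
    assume S: "\<Union>C \<in> null"
    then have "\<Union>C \<in> C" by (intro maxchain_ins[OF C]) auto
    obtain z where z: "z \<notin> \<Union>C" using S univ_not_null by (metis UNIV_eq_I)
    have "\<Union>C \<union> {z} \<in> null" using null_Un[OF S single_null] by simp
    then have "\<Union>C \<union> {z} \<in> C" by (intro maxchain_ins[OF C]) auto
    then show False using z by auto
  qed
  define f where "f x = \<Inter>{A\<in>C. x\<in>A}" for x
  have fC: "f x \<in> C" and xf: "x \<in> f x" if x: "x \<in> \<Union>C" for x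
  proof -
    obtain A where A: "A \<in> C" "x \<in> A" using x by auto
    have "f x \<subseteq> A" using A unfolding f_def by auto
    then have "f x \<in> null" using A ch(1) null_sub by auto
    moreover have "\<forall>D\<in>C. D \<subseteq> f x \<or> f x \<subseteq> D"
    proof
      fix D assume D: "D \<in> C"
      show "D \<subseteq> f x \<or> f x \<subseteq> D"
      proof (cases "x \<in> D")
        case True then show ?thesis unfolding f_def using D by auto
      next
        case False
        have "D \<subseteq> A'" if "A' \<in> C" "x \<in> A'" for A'
          using ch(2)[OF D that(1)] that False by auto
        then show ?thesis unfolding f_def by auto
      qed
    qed
    ultimately show "f x \<in> C" by (intro maxchain_ins[OF C]) auto
    show "x \<in> f x" unfolding f_def by auto
  qed
  have "inj_on f (\<Union>C)"
  proof (rule inj_onI, rule ccontr)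
    fix x y assume x: "x \<in> \<Union>C" and y: "y \<in> \<Union>C" and eq: "f x = f y" and ne: "x \<noteq> y"
    let ?B = "f x - {y}"
    have "?B \<in> null" using fC[OF x] ch(1) null_sub by blast
    moreover have "\<forall>D\<in>C. D \<subseteq> ?B \<or> ?B \<subseteq> D"
    proof
      fix D assume D: "D \<in> C"
      show "D \<subseteq> ?B \<or> ?B \<subseteq> D"
      proof (cases "f x \<subseteq> D")
        case True then show ?thesis by auto
      next
        case False
        then have "D \<subseteq> f x" using ch(2)[OF D fC[OF x]] by auto
        moreover have "y \<notin> D"
        proof
          assume "y \<in> D" then have "f y \<subseteq> D" unfolding f_def using D by auto
          then show False using False eq by auto
        qed
        ultimately show ?thesis by auto
      qed
    qed
    ultimately have "?B \<in> C" by (intro maxchain_ins[OF C]) auto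
    then have "f x \<subseteq> ?B" using xf[OF x] ne unfolding f_def by auto
    then show False using xf[OF y] eq by auto
  qed
  moreover have "f ` \<Union>C \<subseteq> C" using fC by auto
  ultimately show "|\<Union>C| \<le>o |C|" using card_of_ordLeq by blast
qed

lemma min_exists: "S \<noteq> {} \<Longrightarrow> \<exists>A. min_card_in S A"
proof -
  assume "S \<noteq> {}"
  then have "card_of ` S \<noteq> {}" by auto
  from exists_minim_Well_order[OF this] obtain A where "A \<in> S" "\<forall>B\<in>S. |A| \<le>o |B|"
    using card_of_Well_order by fastforce
  then show ?thesis unfolding min_card_in_def by auto
qed

lemma upper_bound:
  assumes X: "min_card_in non_null_sets X"
  shows "\<exists>C. subset.maxchain null C \<and> |C| \<le>o |X|"
proof -
  define r where "r = |X|"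
  have WO: "Well_order r" unfolding r_def by (rule card_of_Well_order)
  have F: "Field r = X" unfolding r_def by (rule Field_card_of)
  have Xn: "X \<notin> null" and Xmin: "\<And>B. B \<notin> null \<Longrightarrow> |X| \<le>o |B|"
    using X unfolding min_card_in_def non_null_sets_def by auto
  have tr: "trans r" using WO unfolding well_order_on_def linear_order_on_def partial_order_on_def preorder_on_def by blast
  have an: "antisym r" using WO unfolding well_order_on_def linear_order_on_def partial_order_on_def by blast
  have wf: "wf (r - Id)" using WO unfolding well_order_on_def by blast
  have tot: "\<And>a b. a \<in> X \<Longrightarrow> b \<in> X \<Longrightarrow> a \<noteq> b \<Longrightarrow> (a,b) \<in> r \<or> (b,a) \<in> r"
    using WO F unfolding well_order_on_def linear_order_on_def total_on_def by blast
  define A where "A y = underS r y" for y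
  have AX: "A y \<subseteq> X" for y unfolding A_def using F underS_Field by fastforce
  have Ai: "b \<in> A y \<longleftrightarrow> b \<noteq> y \<and> (b,y) \<in> r" for b y unfolding A_def underS_def by auto
  have An: "A y \<in> null" if "y \<in> X" for y
  proof (rule ccontr)
    assume "A y \<notin> null"
    then have "|X| \<le>o |A y|" by (rule Xmin)
    moreover have "|A y| <o |X|" unfolding A_def r_def
      using card_of_underS[OF card_of_Card_order, of y X] that Field_card_of[of X] by simp
    ultimately show False using not_ordLess_ordLeq by blast
  qed
  have Amono: "A y \<subseteq> A z" if "(y,z) \<in> r" for y z
  proof
    fix b assume "b \<in> A y"
    then have "b \<noteq> y" "(b,y) \<in> r" using Ai by auto
    have bz: "(b,z) \<in> r" using tr \<open>(b,y) \<in> r\<close> that unfolding trans_def by blast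
    have "b \<noteq> z"
    proof
      assume "b = z"
      then have "y = b" using an \<open>(b,y) \<in> r\<close> that unfolding antisym_def by blast
      then show False using \<open>b \<noteq> y\<close> by simp
    qed
    then show "b \<in> A z" using bz Ai by simp
  qed
  define C where "C = A ` X"
  have cmpC: "\<forall>a\<in>C. \<forall>b\<in>C. a \<subseteq> b \<or> b \<subseteq> a"
    unfolding C_def
  proof (intro ballI)
    fix a b assume "a \<in> A ` X" "b \<in> A ` X"
    then obtain y z where "y \<in> X" "z \<in> X" "a = A y" "b = A z" by auto
    then show "a \<subseteq> b \<or> b \<subseteq> a" using tot[of y z] Amono[of y z] Amono[of z y] by (cases "y = z") auto
  qed
  have chain: "subset.chain null C"
    unfolding subset.chain_def
  proof (intro conjI)
    show "C \<subseteq> null" unfolding C_def using An by blast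
    show "\<forall>x\<in>C. \<forall>y\<in>C. (\<subset>)\<^sup>=\<^sup>= x y \<or> (\<subset>)\<^sup>=\<^sup>= y x" using cmpC by blast
  qed
  have "subset.maxchain null C"
    unfolding subset.maxchain_def
  proof (intro conjI chain notI, elim exE conjE)
    fix S assume S: "subset.chain null S" "C \<subset> S"
    then obtain N where N: "N \<in> S" "N \<notin> C" by auto
    have Nn: "N \<in> null" using S N unfolding subset.chain_def by auto
    have cmp: "A y \<subseteq> N \<or> N \<subseteq> A y" if "y \<in> X" for y
    proof -
      have "A y \<in> S" using that S unfolding C_def by auto
      then show ?thesis using S(1) N(1) unfolding subset.chain_def by auto
    qed
    show False
    proof (cases "\<forall>y\<in>X. A y \<subseteq> N")
      case True
      have "X \<in> null"
      proof (cases "\<exists>y0\<in>X. \<forall>z\<in>X. y0 \<notin> A z")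
        case True
        then obtain y0 where y0: "y0 \<in> X" "\<forall>z\<in>X. y0 \<notin> A z" by auto
        have "X \<subseteq> N \<union> {y0}"
        proof
          fix y assume y: "y \<in> X"
          show "y \<in> N \<union> {y0}"
          proof (cases "y = y0")
            case False
            then have "(y,y0) \<in> r \<or> (y0,y) \<in> r" using tot y y0 by auto
            moreover have "(y0,y) \<notin> r" using y0(2) y False Ai by auto
            ultimately have "y \<in> A y0" using False Ai by auto
            then show ?thesis using y0(1) \<open>\<forall>y\<in>X. A y \<subseteq> N\<close> by blast
          qed auto
        qed
        then show ?thesis using null_sub null_Un[OF Nn single_null] by blast
      next
        case False
        then have "X \<subseteq> N" using \<open>\<forall>y\<in>X. A y \<subseteq> N\<close> by blast
        then show ?thesis using null_sub Nn by blast
      qed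
      then show False using Xn by simp
    next
      case False
      then obtain y0 where "y0 \<in> {y\<in>X. \<not> A y \<subseteq> N}" by auto
      then obtain y where y1: "y \<in> {y\<in>X. \<not> A y \<subseteq> N}"
        and ymin: "\<And>u. (u,y) \<in> r - Id \<Longrightarrow> u \<notin> {y\<in>X. \<not> A y \<subseteq> N}" by (rule wfE_min[OF wf]) blast
      from y1 have y: "y \<in> X" "\<not> A y \<subseteq> N" by simp_all
      have NA: "N \<subseteq> A y" using cmp[OF y(1)] y(2) by auto
      obtain w0 where "w0 \<in> A y - N" using y(2) by auto
      then obtain w where w: "w \<in> A y - N"
        and wmin: "\<And>u. (u,w) \<in> r - Id \<Longrightarrow> u \<notin> A y - N" by (rule wfE_min[OF wf]) blast
      have wX: "w \<in> X" using w AX by auto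
      have wy: "(w,y) \<in> r - Id" using w Ai by auto
      have "A w \<subseteq> N" using ymin[OF wy] wX by auto
      moreover have "N \<subseteq> A w"
      proof
        fix u assume u: "u \<in> N"
        then have uy: "u \<in> A y" using NA by auto
        then have uX: "u \<in> X" using AX by auto
        have uw: "u \<noteq> w" using u w by auto
        show "u \<in> A w"
        proof (rule ccontr)
          assume "u \<notin> A w"
          then have "(w,u) \<in> r" using tot[OF uX wX uw] Ai uw by auto
          then have "w \<in> A u" using Ai uw by auto
          moreover have "(u,y) \<in> r - Id" using uy Ai by auto
          then have "A u \<subseteq> N" using ymin uX by auto
          ultimately show False using w by auto
        qed
      qed
      ultimately have "N = A w" by auto
      then show False using N(2) wX unfolding C_def by auto
    qed
  qed
  moreover have "|C| \<le>o |X|" unfolding C_def by (rule card_of_image)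
  ultimately show ?thesis by blast
qed

theorem mainTheorem11:
  shows "\<exists>C X. min_card_in maximal_chains_null C \<and> min_card_in non_null_sets X \<and> card_of C =o card_of X"
proof -
  obtain C0 where "subset.maxchain null C0" using subset.Hausdorff by blast
  then have "maximal_chains_null \<noteq> {}" unfolding maximal_chains_null_def by auto
  then obtain C where C: "min_card_in maximal_chains_null C" using min_exists by blast
  have "UNIV \<in> non_null_sets" unfolding non_null_sets_def using univ_not_null by auto
  then have "non_null_sets \<noteq> {}" by auto
  then obtain X where X: "min_card_in non_null_sets X" using min_exists by blast
  have Cm: "subset.maxchain null C" and Cmin: "\<And>D. subset.maxchain null D \<Longrightarrow> |C| \<le>o |D|"
    using C unfolding min_card_in_def maximal_chains_null_def by auto
  have Xmin: "\<And>B. B \<notin> null \<Longrightarrow> |X| \<le>o |B|"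
    using X unfolding min_card_in_def non_null_sets_def by auto
  obtain D where D: "subset.maxchain null D" "|D| \<le>o |X|" using upper_bound[OF X] by blast
  have 1: "|C| \<le>o |X|" using Cmin[OF D(1)] D(2) ordLeq_transitive by blast
  have 2: "|X| \<le>o |C|" using Xmin[OF lower_bound(1)[OF Cm]] lower_bound(2)[OF Cm] ordLeq_transitive by blast
  show ?thesis using C X 1 2 ordIso_iff_ordLeq by blast
qed

end
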